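(* Let $a$ and $i$ be positive integers. Then $$\binom{3a+i}{a+i}=\sum_{k\geq0}\frac{i+3k}{i+k}\binom{i+k}{2k}\binom{3a+i}{a-k}=\sum_{k\geq0}\left[\binom{i+k}{2k}+\binom{i+k-1}{2k-1}\right]\binom{3a+i}{a-k}.$$
   Context: Ordinary binomial coefficients, with $\binom{n}{m}=0$ when $m<0$ or $m>n$. *)

theory Defs
  imports Complex_Main
begin

definition ibinom :: "int \<Rightarrow> int \<Rightarrow> int" where
  "ibinom n m = (if 0 \<le> m \<and> m \<le> n then int (nat n choose nat m) else 0)"

end

theory Submission
  imports Defs Complex_Main
begin

lemma ib_nat: "ibinom (int N) (int M) = int (N choose M)"
  by (simp add: ibinom_def binomial_eq_0)

lemma ib_neg: "m < 0 \<Longrightarrow> ibinom n m = 0"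
  by (simp add: ibinom_def)

lemma nat_L1: "Suc k * (n choose Suc k) = (n - k) * (n choose k)"
  using binomial_absorption binomial_absorb_comp by metis

lemma L1: "m * ibinom n m = (n - m + 1) * ibinom n (m - 1)"
proof (cases "m \<le> 0 \<or> n < 0")
  case True
  then show ?thesis
    by (auto simp: ibinom_def)
next
  case False
  then have "n \<ge> 0" "m - 1 \<ge> 0" by auto
  then obtain N K where N: "n = int N" and K0: "m - 1 = int K"
    using nonneg_int_cases by metis
  then have K: "m = int (Suc K)" by simp
  have e1: "ibinom n m = int (N choose Suc K)" unfolding N K ib_nat ..
  have e2: "ibinom n (m - 1) = int (N choose K)" unfolding N K0 ib_nat ..
  have "m * ibinom n m = int (Suc K * (N choose Suc K))" unfolding e1 using K by (simp add: algebra_simps)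
  also have "\<dots> = int ((N - K) * (N choose K))" by (simp only: nat_L1)
  also have "\<dots> = (n - m + 1) * ibinom n (m - 1)"
  proof (cases "K \<le> N")
    case True then show ?thesis unfolding e2 using N K by (simp add: of_nat_diff)
  next
    case False then show ?thesis unfolding e2 using N K by (simp add: binomial_eq_0)
  qed
  finally show ?thesis .
qed

lemma L2: "m * ibinom n m = n * ibinom (n - 1) (m - 1)"
proof (cases "m \<le> 0 \<or> n \<le> 0")
  case True
  then show ?thesis
    by (auto simp: ibinom_def)
next
  case False
  then have "n - 1 \<ge> 0" "m - 1 \<ge> 0" by auto
  then obtain N K where N0: "n - 1 = int N" and K0: "m - 1 = int K"
    using nonneg_int_cases by metis
  then have N: "n = int (Suc N)" and K: "m = int (Suc K)" by simp_all
  have e1: "ibinom n m = int (Suc N choose Suc K)" unfolding N K ib_nat ..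
  have e2: "ibinom (n - 1) (m - 1) = int (N choose K)" unfolding N0 K0 ib_nat ..
  have "int (Suc K * (Suc N choose Suc K)) = int (Suc N * (N choose K))"
    using Suc_times_binomial[of K N] by metis
  then show ?thesis unfolding e1 e2 unfolding N K by (simp only: of_nat_mult)
qed

lemma L3: "n \<ge> 0 \<Longrightarrow> (n + 1 - m) * ibinom (n + 1) m = (n + 1) * ibinom n m"
proof (cases "m < 0")
  case True
  then show ?thesis by (simp add: ib_neg)
next
  case False
  assume "n \<ge> 0"
  then obtain N M where N: "n = int N" and M: "m = int M"
    using False nonneg_int_cases not_less by metis
  have e: "n + 1 = int (Suc N)" using N by simp
  have e1: "ibinom (n+1) m = int (Suc N choose M)" unfolding e M ib_nat ..
  have e2: "ibinom n m = int (N choose M)" unfolding N M ib_nat ..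
  have h: "int ((Suc N - M) * (Suc N choose M)) = int (Suc N * (N choose M))"
    using binomial_absorb_comp[of "Suc N" M] by simp
  show ?thesis
  proof (cases "M \<le> Suc N")
    case True
    have "(int (Suc N) - int M) * int (Suc N choose M) = int (Suc N) * int (N choose M)"
      using h True by (simp only: of_nat_mult of_nat_diff)
    then show ?thesis unfolding e1 e2 unfolding e M by simp
  next
    case False
    then show ?thesis unfolding e1 e2 unfolding e M by (simp add: binomial_eq_0)
  qed
qed

lemma alg:
  fixes a i k A E u v w :: real
  assumes "u \<noteq> 0" "v \<noteq> 0" "w \<noteq> 0" and U: "u = 2*k-1" and V: "v = 2*k" and W: "w = 2*a+i+k+1"
  shows "(a+i+1) * ((i+k+1)*((i+k)*A/u)/v + (i+k)*A/u) * ((3*a+i+1)*E/w) - (3*a+i+1) * ((i-k+1)*((i+k)*A/u)/v + (i-k+1)*A/u) * E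
     = (3*a+i+1) * (A * E - (i-k+1)*((i+k)*A/u)/v * ((a-k)*E/w))"
proof -
  have "(a+i+1) * ((i+k+1)*((i+k)*A/u)/v + (i+k)*A/u) * ((3*a+i+1)*E/w) - (3*a+i+1) * ((i-k+1)*((i+k)*A/u)/v + (i-k+1)*A/u) * E
     - (3*a+i+1) * (A * E - (i-k+1)*((i+k)*A/u)/v * ((a-k)*E/w)) = 
    ((a+i+1) * ((i+k+1)*(i+k)*A + (i+k)*A*v) * ((3*a+i+1)*E) - (3*a+i+1) * ((i-k+1)*(i+k)*A + (i-k+1)*A*v) * E * w
     - (3*a+i+1) * (A * E * u * v * w - (i-k+1)*(i+k)*A * ((a-k)*E))) / (u*v*w)"
    using assms(1-3) by (simp add: field_simps)
  also have "\<dots> = 0" unfolding U V W by (simp add: algebra_simps)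
  finally show ?thesis by simp
qed

definition cc :: "int \<Rightarrow> int \<Rightarrow> int" where
  "cc i k = ibinom (i+k) (2*k) + ibinom (i+k-1) (2*k-1)"

lemma step_k:
  fixes a i k :: int
  assumes i0: "0 \<le> i" and k0: "0 \<le> k" and ka: "k \<le> a"
  shows "(a+i+1) * cc (i+1) k * ibinom (3*a+i+1) (a-k) - (3*a+i+1) * cc i k * ibinom (3*a+i) (a-k)
     = (3*a+i+1) * (ibinom (i+k-1) (2*k-2) * ibinom (3*a+i) (a-k) - ibinom (i+k) (2*k) * ibinom (3*a+i) (a-k-1))"
proof -
  define n where "n = 3*a+i"
  define m where "m = a-k"
  define E where "E = ibinom n m"
  define X where "X = ibinom (n+1) m"
  define Y where "Y = ibinom n (m-1)"
  have hX: "(n+1-m) * X = (n+1) * E" unfolding X_def E_def by (rule L3) (use assms in \<open>simp add: n_def\<close>)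
  have hY: "m * E = (n-m+1) * Y" unfolding Y_def E_def by (rule L1)
  have pos: "n+1-m > 0" using assms by (simp add: n_def m_def)
  have rX: "real_of_int X = real_of_int (n+1) * real_of_int E / real_of_int (n+1-m)"
    using hX pos by (simp add: field_simps flip: of_int_mult)
  have rY: "real_of_int Y = real_of_int m * real_of_int E / real_of_int (n+1-m)"
    using hY pos by (simp add: field_simps flip: of_int_mult)
  show ?thesis
  proof (cases "k = 0")
    case True
    have c0: "cc i 0 = 1" "cc (i+1) 0 = 1" using i0 by (simp_all add: cc_def ibinom_def)
    have "ibinom (i-1) (-2) = 0" "ibinom i 0 = 1" using i0 by (simp_all add: ibinom_def)
    then have g: "(a+i+1) * X - (n+1) * E = (n+1) * (0 - Y)"
    proof -
      have "real_of_int ((a+i+1) * X - (n+1) * E) = real_of_int ((n+1) * (0 - Y))"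
        using pos unfolding of_int_mult of_int_diff rX rY
        by (simp add: field_simps m_def n_def True)
      then show ?thesis by (simp only: of_int_eq_iff)
    qed
    show ?thesis using g c0 `ibinom (i-1) (-2) = 0` `ibinom i 0 = 1` True
      unfolding n_def m_def X_def Y_def E_def by (simp add: add.commute add.left_commute)
  next
    case False
    then have k1: "k \<ge> 1" using k0 by simp
    define p where "p = i+k-1"
    define q where "q = 2*k-2"
    define A where "A = ibinom p q"
    define B where "B = ibinom (p+1) (q+1)"
    define P where "P = ibinom (p+1) (q+2)"
    define Q where "Q = ibinom p (q+1)"
    define R where "R = ibinom (p+2) (q+2)"
    have hB: "(q+1) * B = (p+1) * A" unfolding A_def B_def using L2[of "q+1" "p+1"] by simp
    have hP: "(q+2) * P = (p-q) * B" unfolding P_def B_def using L1[of "q+2" "p+1"] by (simp add: add.commute)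
    have hQ: "(q+1) * Q = (p-q) * A" unfolding Q_def A_def using L1[of "q+1" p] by simp
    have hR: "(q+2) * R = (p+2) * B" unfolding R_def B_def using L2[of "q+2" "p+2"] by (simp add: add.commute)
    have q1: "q+1 > 0" "q+2 > 0" using k1 by (simp_all add: q_def)
    have kr: "real_of_int k \<ge> 1" using k1 by simp
    have d1: "2 * real_of_int k - 1 \<noteq> 0" "2 * real_of_int k \<noteq> 0" using kr by auto
    have d3: "2 * real_of_int a + real_of_int i + real_of_int k + 1 \<noteq> 0" using assms by linarith
    have rB: "real_of_int B = (real_of_int i + real_of_int k) * real_of_int A / (2 * real_of_int k - 1)"
    proof -
      have "real_of_int ((q+1) * B) = real_of_int ((p+1) * A)" using hB by simp
      then show ?thesis using d1 by (simp add: p_def q_def field_simps)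
    qed
    have rP: "real_of_int P = (real_of_int i - real_of_int k + 1) * real_of_int B / (2 * real_of_int k)"
    proof -
      have "real_of_int ((q+2) * P) = real_of_int ((p-q) * B)" using hP by simp
      then show ?thesis using d1 by (simp add: p_def q_def field_simps)
    qed
    have rQ: "real_of_int Q = (real_of_int i - real_of_int k + 1) * real_of_int A / (2 * real_of_int k - 1)"
    proof -
      have "real_of_int ((q+1) * Q) = real_of_int ((p-q) * A)" using hQ by simp
      then show ?thesis using d1 by (simp add: p_def q_def field_simps)
    qed
    have rR: "real_of_int R = (real_of_int i + real_of_int k + 1) * real_of_int B / (2 * real_of_int k)"
    proof -
      have "real_of_int ((q+2) * R) = real_of_int ((p+2) * B)" using hR by simp
      then show ?thesis using d1 by (simp add: p_def q_def field_simps)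
    qed
    have rX': "real_of_int X = (3 * real_of_int a + real_of_int i + 1) * real_of_int E / (2 * real_of_int a + real_of_int i + real_of_int k + 1)"
      using rX by (simp add: n_def m_def algebra_simps)
    have rY': "real_of_int Y = (real_of_int a - real_of_int k) * real_of_int E / (2 * real_of_int a + real_of_int i + real_of_int k + 1)"
      using rY by (simp add: n_def m_def algebra_simps)
    have c1: "cc (i+1) k = R + B" unfolding cc_def R_def B_def p_def q_def by (simp add: algebra_simps)
    have c2: "cc i k = P + Q" unfolding cc_def P_def Q_def p_def q_def by (simp add: algebra_simps)
    have g: "(a+i+1) * (R+B) * X - (n+1) * (P+Q) * E = (n+1) * (A * E - P * Y)"
    proof -
      have "real_of_int ((a+i+1) * (R+B) * X - (n+1) * (P+Q) * E) = real_of_int ((n+1) * (A * E - P * Y))"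
        unfolding of_int_mult of_int_diff of_int_add rX' rY' rP rQ rR n_def of_int_1
        unfolding rB
        using alg[OF d1 d3 refl refl refl, of "real_of_int A" "real_of_int E"]
        by (simp add: algebra_simps)
      then show ?thesis by (simp only: of_int_eq_iff)
    qed
    have e1: "ibinom (i+k-1) (2*k-2) = A" unfolding A_def p_def q_def ..
    have e2: "ibinom (i+k) (2*k) = P" unfolding P_def p_def q_def by (simp add: algebra_simps)
    show ?thesis using g unfolding c1 c2 e1 e2 unfolding n_def m_def X_def Y_def E_def
      by (simp add: add.commute add.left_commute)
  qed
qed


lemma tele_int:
  fixes f :: "int \<Rightarrow> int"
  shows "(\<Sum>k\<in>{0..int N}. (f k - f (k+1))) = f 0 - f (int N + 1)"
proof (induction N)
  case 0
  then show ?case by simp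
next
  case (Suc N)
  have "{0..int (Suc N)} = insert (1 + int N) {0..int N}"
    using atLeastAtMostPlus1_int_conv[of 0 "int N"] by simp
  then show ?case using Suc by (simp add: algebra_simps)
qed

lemma main_int:
  fixes a :: int and I :: nat
  assumes a0: "0 \<le> a"
  shows "(\<Sum>k\<in>{0..a}. cc (int I) k * ibinom (3*a + int I) (a-k)) = ibinom (3*a + int I) (a + int I)"
proof (induction I)
  case 0
  have "(\<Sum>k\<in>{0..a}. cc 0 k * ibinom (3*a) (a-k)) = (\<Sum>k\<in>{0..a}. if k = 0 then ibinom (3*a) a else 0)"
  proof (rule sum.cong)
    fix k assume "k \<in> {0..a}"
    then show "cc 0 k * ibinom (3*a) (a-k) = (if k = 0 then ibinom (3*a) a else 0)"
      by (auto simp: cc_def ibinom_def)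
  qed simp
  also have "\<dots> = ibinom (3*a) a" using a0 by simp
  finally show ?case by simp
next
  case (Suc I)
  define i where "i = int I"
  have i0: "0 \<le> i" by (simp add: i_def)
  have IH: "(\<Sum>k\<in>{0..a}. cc i k * ibinom (3*a + i) (a-k)) = ibinom (3*a + i) (a + i)"
    using Suc by (simp add: i_def)
  define g where "g k = ibinom (i+k-1) (2*k-2) * ibinom (3*a+i) (a-k)" for k
  have st: "(a+i+1) * cc (i+1) k * ibinom (3*a+i+1) (a-k) - (3*a+i+1) * cc i k * ibinom (3*a+i) (a-k)
     = (3*a+i+1) * (g k - g (k+1))" if "k \<in> {0..a}" for k
    using step_k[OF i0, of k a] that unfolding g_def by (simp add: algebra_simps)
  have "(a+i+1) * (\<Sum>k\<in>{0..a}. cc (i+1) k * ibinom (3*a+i+1) (a-k)) - (3*a+i+1) * (\<Sum>k\<in>{0..a}. cc i k * ibinom (3*a+i) (a-k))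
      = (\<Sum>k\<in>{0..a}. (a+i+1) * cc (i+1) k * ibinom (3*a+i+1) (a-k) - (3*a+i+1) * cc i k * ibinom (3*a+i) (a-k))"
    by (simp add: sum_distrib_left sum_subtractf mult.assoc)
  also have "\<dots> = (\<Sum>k\<in>{0..a}. (3*a+i+1) * (g k - g (k+1)))"
    using st by (rule sum.cong[OF refl])
  also have "\<dots> = (3*a+i+1) * (\<Sum>k\<in>{0..a}. (g k - g (k+1)))"
    by (simp add: sum_distrib_left)
  also have "(\<Sum>k\<in>{0..a}. (g k - g (k+1))) = g 0 - g (a+1)"
    using tele_int[of g "nat a"] a0 by simp
  also have "g 0 - g (a+1) = 0" by (simp add: g_def ibinom_def)
  finally have eq: "(a+i+1) * (\<Sum>k\<in>{0..a}. cc (i+1) k * ibinom (3*a+i+1) (a-k)) = (3*a+i+1) * ibinom (3*a + i) (a + i)"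
    using IH by simp
  have "(a+i+1) * ibinom (3*a+i+1) (a+i+1) = (3*a+i+1) * ibinom (3*a + i) (a + i)"
    using L2[of "a+i+1" "3*a+i+1"] by simp
  with eq have "(a+i+1) * (\<Sum>k\<in>{0..a}. cc (i+1) k * ibinom (3*a+i+1) (a-k)) = (a+i+1) * ibinom (3*a+i+1) (a+i+1)"
    by simp
  moreover have "a+i+1 \<noteq> 0" using a0 i0 by simp
  ultimately have "(\<Sum>k\<in>{0..a}. cc (i+1) k * ibinom (3*a+i+1) (a-k)) = ibinom (3*a+i+1) (a+i+1)"
    by simp
  then show ?case by (simp add: i_def algebra_simps)
qed

theorem lemma2:
  fixes a i :: int
  assumes "a > 0" and "i > 0"
  shows "real_of_int (ibinom (3*a+i) (a+i))
           = (\<Sum>k\<in>{0..a}. real_of_int (i + 3*k) / real_of_int (i + k)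
                 * real_of_int (ibinom (i+k) (2*k)) * real_of_int (ibinom (3*a+i) (a-k)))
         \<and> ibinom (3*a+i) (a+i)
           = (\<Sum>k\<in>{0..a}. (ibinom (i+k) (2*k) + ibinom (i+k-1) (2*k-1)) * ibinom (3*a+i) (a-k))"
proof -
  obtain I where I: "i = int I" using assms(2) nonneg_int_cases[of i] by auto
  have M: "ibinom (3*a+i) (a+i) = (\<Sum>k\<in>{0..a}. (ibinom (i+k) (2*k) + ibinom (i+k-1) (2*k-1)) * ibinom (3*a+i) (a-k))"
    using main_int[of a I] assms unfolding I cc_def by simp
  have R: "real_of_int (i + 3*k) / real_of_int (i + k) * real_of_int (ibinom (i+k) (2*k)) * real_of_int (ibinom (3*a+i) (a-k))
      = real_of_int ((ibinom (i+k) (2*k) + ibinom (i+k-1) (2*k-1)) * ibinom (3*a+i) (a-k))" if "k \<in> {0..a}" for k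
  proof -
    have pos: "real_of_int (i+k) > 0" using that assms by simp
    have h: "(2*k) * ibinom (i+k) (2*k) = (i+k) * ibinom (i+k-1) (2*k-1)" using L2 by simp
    have "real_of_int ((2*k) * ibinom (i+k) (2*k)) = real_of_int ((i+k) * ibinom (i+k-1) (2*k-1))"
      by (simp only: h)
    then have "real_of_int (2*k) * real_of_int (ibinom (i+k) (2*k)) = real_of_int (i+k) * real_of_int (ibinom (i+k-1) (2*k-1))"
      by (simp only: of_int_mult)
    then have Z: "real_of_int (ibinom (i+k-1) (2*k-1)) = real_of_int (2*k) * real_of_int (ibinom (i+k) (2*k)) / real_of_int (i+k)"
      using pos by (simp add: field_simps)
    show ?thesis unfolding of_int_mult of_int_add Z using pos by (simp add: field_simps)
  qed
  have "(\<Sum>k\<in>{0..a}. real_of_int (i + 3*k) / real_of_int (i + k)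
                 * real_of_int (ibinom (i+k) (2*k)) * real_of_int (ibinom (3*a+i) (a-k)))
     = real_of_int (\<Sum>k\<in>{0..a}. (ibinom (i+k) (2*k) + ibinom (i+k-1) (2*k-1)) * ibinom (3*a+i) (a-k))"
    using R by (simp add: of_int_sum)
  then show ?thesis using M by simp
qed

end
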